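(* Let $G$ be a simple stochastic game, let $A$ be a subset of the arcs of $G$, and let $\sigma$ be a positional MAX strategy. Then $v^{G}_{\sigma}(x) = v^{G[A,\sigma]}_{\sigma}(x)$ for every vertex $x$ of $G$.
   Context: A simple stochastic game (SSG) $G$ is a finite directed graph whose vertex set $V$ is partitioned into $V_{\max}$ (MAX vertices), $V_{\min}$ (MIN vertices), $V_R$ (random vertices) and a nonempty set $V_S$ (sinks); every vertex of $V_{\max}\cup V_{\min}\cup V_R$ has at least one outgoing arc, every sink has exactly one outgoing arc, which is a self-loop; each random vertex $x$ carries a probability distribution $p_x$ with rational values on its out-neighbourhood, positive on every out-neighbour; each sink $s$ has a rational value $\mathrm{Val}(s)\in[0,1]$. A positional MAX (resp. MIN) strategy assigns to each MAX (resp. MIN) vertex one of its out-neighbours. Given $\sigma,\tau$ and a start vertex $x_0$, the random play moves from a MAX vertex $x$ to $\sigma(x)$, from a MIN vertex $x$ to $\tau(x)$, from a random vertex $x$ to an out-neighbour drawn according to $p_x$ independently, and stays forever at a sink once reached. The play's value is $\mathrm{Val}(s)$ if it reaches sink $s$ and $0$ otherwise; $v^G_{\sigma,\tau}(x_0)$ is its expectation. A best response to $\sigma$ is a positional MIN strategy $\tau$ with $v_{\sigma,\tau}\le v_{\sigma,\tau'}$ pointwise for all MIN strategies $\tau'$; positional best responses exist, and $v^G_\sigma:=v^G_{\sigma,\tau}$ for any best response $\tau$. Transformed game: for a set $A$ of arcs of $G$ and $f:A\to\mathbb{Q}$, $G[A,f]$ is obtained from a copy of $G$ by replacing each arc $e=(x,y)\in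 A$ by an arc $(x,s_e)$ to a new sink $s_e$ of value $f(e)$ (for random $x$, $p_x(s_e)=p_x(y)$); $y$ is kept. $G[A,\sigma]$ is $G[A,f]$ with $f((x,y))=v^G_\sigma(y)$. Strategies of $G$ and of $G[A,\sigma]$ are identified (a MAX vertex $x$ with $\sigma(x)=y$, $(x,y)\in A$, moves to $s_{(x,y)}$ in $G[A,\sigma]$). *)

theory Defs
  imports Complex_Main
begin

datatype kind = Max | Min | Rand | Sink

record 'v ssg =
  verts :: "'v set"
  kind  :: "'v \<Rightarrow> kind"
  arcs  :: "('v \<times> 'v) set"
  prob  :: "'v \<Rightarrow> 'v \<Rightarrow> real"
  val   :: "'v \<Rightarrow> real"

definition sinks :: "('v, 'b) ssg_scheme \<Rightarrow> 'v set" where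
  "sinks G = {s \<in> verts G. kind G s = Sink}"

definition ssg :: "('v, 'b) ssg_scheme \<Rightarrow> bool" where
  "ssg G \<longleftrightarrow>
     finite (verts G) \<and> arcs G \<subseteq> verts G \<times> verts G \<and> sinks G \<noteq> {} \<and>
     (\<forall>x\<in>verts G. kind G x \<noteq> Sink \<longrightarrow> (\<exists>y. (x, y) \<in> arcs G)) \<and>
     (\<forall>x\<in>verts G. kind G x = Sink \<longrightarrow> {y. (x, y) \<in> arcs G} = {x}) \<and>
     (\<forall>x\<in>verts G. kind G x = Rand \<longrightarrow>
        (\<forall>y. (x, y) \<in> arcs G \<longrightarrow> prob G x y > 0 \<and> prob G x y \<in> \<rat>) \<and>
        (\<Sum>y\<in>{y. (x, y) \<in> arcs G}. prob G x y) = 1) \<and>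
     (\<forall>s\<in>sinks G. val G s \<in> \<rat> \<and> 0 \<le> val G s \<and> val G s \<le> 1)"

definition max_strategy :: "('v, 'b) ssg_scheme \<Rightarrow> ('v \<Rightarrow> 'v) \<Rightarrow> bool" where
  "max_strategy G \<sigma> \<longleftrightarrow> (\<forall>x\<in>verts G. kind G x = Max \<longrightarrow> (x, \<sigma> x) \<in> arcs G)"

definition min_strategy :: "('v, 'b) ssg_scheme \<Rightarrow> ('v \<Rightarrow> 'v) \<Rightarrow> bool" where
  "min_strategy G \<tau> \<longleftrightarrow> (\<forall>x\<in>verts G. kind G x = Min \<longrightarrow> (x, \<tau> x) \<in> arcs G)"

definition trans :: "('v, 'b) ssg_scheme \<Rightarrow> ('v \<Rightarrow> 'v) \<Rightarrow> ('v \<Rightarrow> 'v) \<Rightarrow> 'v \<Rightarrow> 'v \<Rightarrow> real" where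
  "trans G \<sigma> \<tau> x y =
     (case kind G x of
        Max \<Rightarrow> (if y = \<sigma> x then 1 else 0)
      | Min \<Rightarrow> (if y = \<tau> x then 1 else 0)
      | Rand \<Rightarrow> (if (x, y) \<in> arcs G then prob G x y else 0)
      | Sink \<Rightarrow> (if y = x then 1 else 0))"

fun nstep :: "('v, 'b) ssg_scheme \<Rightarrow> ('v \<Rightarrow> 'v) \<Rightarrow> ('v \<Rightarrow> 'v) \<Rightarrow> nat \<Rightarrow> 'v \<Rightarrow> 'v \<Rightarrow> real" where
  "nstep G \<sigma> \<tau> 0 x y = (if y = x then 1 else 0)"
| "nstep G \<sigma> \<tau> (Suc n) x y = (\<Sum>z\<in>verts G. trans G \<sigma> \<tau> x z * nstep G \<sigma> \<tau> n z y)"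

text \<open>Expected value of the play: sum over sinks of Val(s) times the probability of
  reaching s (= limit of the probability of being at s after n steps, sinks absorbing).\<close>
definition play_value :: "('v, 'b) ssg_scheme \<Rightarrow> ('v \<Rightarrow> 'v) \<Rightarrow> ('v \<Rightarrow> 'v) \<Rightarrow> 'v \<Rightarrow> real" where
  "play_value G \<sigma> \<tau> x = lim (\<lambda>n. \<Sum>s\<in>sinks G. val G s * nstep G \<sigma> \<tau> n x s)"

definition best_response :: "('v, 'b) ssg_scheme \<Rightarrow> ('v \<Rightarrow> 'v) \<Rightarrow> ('v \<Rightarrow> 'v) \<Rightarrow> bool" where
  "best_response G \<sigma> \<tau> \<longleftrightarrow> min_strategy G \<tau> \<and>
     (\<forall>\<tau>'. min_strategy G \<tau>' \<longrightarrow> (\<forall>x\<in>verts G. play_value G \<sigma> \<tau> x \<le> play_value G \<sigma> \<tau>' x))"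

definition value_max :: "('v, 'b) ssg_scheme \<Rightarrow> ('v \<Rightarrow> 'v) \<Rightarrow> 'v \<Rightarrow> real" where
  "value_max G \<sigma> x = play_value G \<sigma> (SOME \<tau>. best_response G \<sigma> \<tau>) x"

text \<open>The transformed game G[A,f]: vertices Inl x (copy of G) and new sinks Inr e, e \<in> A.\<close>
definition transform :: "'v ssg \<Rightarrow> ('v \<times> 'v) set \<Rightarrow> ('v \<times> 'v \<Rightarrow> real) \<Rightarrow> ('v + ('v \<times> 'v)) ssg" where
  "transform G A f =
    \<lparr> verts = Inl ` verts G \<union> Inr ` A,
      kind = (\<lambda>u. case u of Inl x \<Rightarrow> kind G x | Inr e \<Rightarrow> Sink),
      arcs = {(Inl x, Inl y) | x y. (x, y) \<in> arcs G - A}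
             \<union> {(Inl x, Inr (x, y)) | x y. (x, y) \<in> A}
             \<union> {(Inr e, Inr e) | e. e \<in> A},
      prob = (\<lambda>u w. case (u, w) of
                (Inl x, Inl y) \<Rightarrow> prob G x y
              | (Inl x, Inr (x', y)) \<Rightarrow> (if x' = x then prob G x y else 0)
              | _ \<Rightarrow> 0),
      val = (\<lambda>u. case u of Inl x \<Rightarrow> val G x | Inr e \<Rightarrow> f e) \<rparr>"

definition transform_strat :: "'v ssg \<Rightarrow> ('v \<times> 'v) set \<Rightarrow> ('v \<Rightarrow> 'v) \<Rightarrow> ('v + ('v \<times> 'v)) ssg" where
  "transform_strat G A \<sigma> = transform G A (\<lambda>(x, y). value_max G \<sigma> y)"

definition lift_strat :: "('v \<times> 'v) set \<Rightarrow> ('v \<Rightarrow> 'v) \<Rightarrow> ('v + ('v \<times> 'v)) \<Rightarrow> ('v + ('v \<times> 'v))" where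
  "lift_strat A \<sigma> u = (case u of
      Inl x \<Rightarrow> (if (x, \<sigma> x) \<in> A then Inr (x, \<sigma> x) else Inl (\<sigma> x))
    | Inr e \<Rightarrow> Inr e)"

end

theory Submission
  imports Defs
begin

definition wfg :: "('v, 'b) ssg_scheme \<Rightarrow> bool" where
  "wfg G \<longleftrightarrow> finite (verts G) \<and> arcs G \<subseteq> verts G \<times> verts G \<and>
     (\<forall>x\<in>verts G. kind G x \<noteq> Sink \<longrightarrow> (\<exists>y. (x, y) \<in> arcs G)) \<and>
     (\<forall>x\<in>verts G. kind G x = Rand \<longrightarrow>
        (\<forall>y. (x, y) \<in> arcs G \<longrightarrow> 0 \<le> prob G x y) \<and>
        (\<Sum>y\<in>verts G. if (x, y) \<in> arcs G then prob G x y else 0) \<le> 1) \<and>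
     (\<forall>s\<in>sinks G. 0 \<le> val G s)"

lemma wfgD:
  assumes "wfg G"
  shows "finite (verts G)" "arcs G \<subseteq> verts G \<times> verts G"
    "\<And>x. x \<in> verts G \<Longrightarrow> kind G x \<noteq> Sink \<Longrightarrow> \<exists>y. (x, y) \<in> arcs G"
    "\<And>x y. x \<in> verts G \<Longrightarrow> kind G x = Rand \<Longrightarrow> (x, y) \<in> arcs G \<Longrightarrow> 0 \<le> prob G x y"
    "\<And>x. x \<in> verts G \<Longrightarrow> kind G x = Rand \<Longrightarrow>
        (\<Sum>y\<in>verts G. if (x, y) \<in> arcs G then prob G x y else 0) \<le> 1"
    "\<And>s. s \<in> sinks G \<Longrightarrow> 0 \<le> val G s"
  using assms unfolding wfg_def by blast+

lemma sum_delta_r: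
  "finite S \<Longrightarrow> (\<Sum>z\<in>S. (f z::real) * (if a = z then 1 else 0)) = (if a \<in> S then f a else 0)"
  by (simp add: sum.delta if_distrib[of "\<lambda>t. _ * t"] cong: if_cong)

lemma sum_delta_l:
  "finite S \<Longrightarrow> (\<Sum>z\<in>S. (if z = a then 1 else 0) * (f z::real)) = (if a \<in> S then f a else 0)"
  by (simp add: sum.delta if_distrib[of "\<lambda>t. t * _"] cong: if_cong)

lemma trans_nonneg:
  assumes "wfg G" "x \<in> verts G"
  shows "0 \<le> trans G \<sigma> \<tau> x z"
  using wfgD(4)[OF assms(1) assms(2)]
  by (cases "kind G x") (auto simp: trans_def)

lemma trans_rowsum:
  assumes "wfg G" "x \<in> verts G"
  shows "(\<Sum>z\<in>verts G. trans G \<sigma> \<tau> x z) \<le> 1"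
proof (cases "kind G x")
  case Rand
  then show ?thesis using wfgD(5)[OF assms] by (simp add: trans_def)
qed (auto simp: trans_def sum.delta wfgD(1)[OF assms(1)])

lemma nstep_nonneg:
  assumes "wfg G" "x \<in> verts G"
  shows "0 \<le> nstep G \<sigma> \<tau> n x y"
  using assms(2)
proof (induction n arbitrary: x)
  case (Suc n)
  then show ?case
    by (auto intro!: sum_nonneg mult_nonneg_nonneg trans_nonneg[OF assms(1)])
qed simp

lemma super_iter:
  assumes "wfg G"
    and sup: "\<forall>x\<in>verts G. (\<Sum>z\<in>verts G. trans G \<sigma> \<tau> x z * U z) \<le> U x"
    and "x \<in> verts G"
  shows "(\<Sum>y\<in>verts G. nstep G \<sigma> \<tau> n x y * U y) \<le> U x"
  using assms(3)
proof (induction n arbitrary: x)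
  case 0
  have "(\<Sum>y\<in>verts G. (if y = x then 1 else 0) * U y) = (\<Sum>y\<in>verts G. if y = x then U y else 0)"
    by (intro sum.cong) auto
  then show ?case using wfgD(1)[OF assms(1)] 0 by simp
next
  case (Suc n)
  have "(\<Sum>y\<in>verts G. nstep G \<sigma> \<tau> (Suc n) x y * U y)
      = (\<Sum>y\<in>verts G. \<Sum>z\<in>verts G. trans G \<sigma> \<tau> x z * nstep G \<sigma> \<tau> n z y * U y)"
    by (simp add: sum_distrib_right)
  also have "\<dots> = (\<Sum>z\<in>verts G. trans G \<sigma> \<tau> x z * (\<Sum>y\<in>verts G. nstep G \<sigma> \<tau> n z y * U y))"
    by (subst sum.swap) (simp add: sum_distrib_left mult.assoc)
  also have "\<dots> \<le> (\<Sum>z\<in>verts G. trans G \<sigma> \<tau> x z * U z)"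
    by (intro sum_mono mult_left_mono Suc.IH trans_nonneg[OF assms(1) Suc.prems])
  also have "\<dots> \<le> U x" using sup Suc.prems by blast
  finally show ?case .
qed

lemma sinks_sub: "sinks G \<subseteq> verts G"
  by (auto simp: sinks_def)

lemma sink_bound:
  assumes "wfg G" "x \<in> verts G"
    and U0: "\<forall>y\<in>verts G. 0 \<le> U y" and Us: "\<forall>s\<in>sinks G. val G s \<le> U s"
  shows "(\<Sum>s\<in>sinks G. val G s * nstep G \<sigma> \<tau> n x s) \<le> (\<Sum>y\<in>verts G. nstep G \<sigma> \<tau> n x y * U y)"
proof -
  have "(\<Sum>s\<in>sinks G. val G s * nstep G \<sigma> \<tau> n x s) \<le> (\<Sum>s\<in>sinks G. nstep G \<sigma> \<tau> n x s * U s)"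
    using Us nstep_nonneg[OF assms(1,2)]
    by (intro sum_mono) (simp add: mult.commute mult_right_mono)
  also have "\<dots> \<le> (\<Sum>y\<in>verts G. nstep G \<sigma> \<tau> n x y * U y)"
    using U0 nstep_nonneg[OF assms(1,2)] wfgD(1)[OF assms(1)]
    by (intro sum_mono2) (auto simp: sinks_def)
  finally show ?thesis .
qed

lemma nstep_mono_sink:
  assumes "wfg G" "s \<in> sinks G" "x \<in> verts G"
  shows "nstep G \<sigma> \<tau> n x s \<le> nstep G \<sigma> \<tau> (Suc n) x s"
  using assms(3)
proof (induction n arbitrary: x)
  case 0
  have sV: "s \<in> verts G" using assms(2) by (simp add: sinks_def)
  have "nstep G \<sigma> \<tau> (Suc 0) x s = trans G \<sigma> \<tau> x s"
    using sV wfgD(1)[OF assms(1)] by (simp add: sum_delta_r)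
  moreover have "x = s \<Longrightarrow> trans G \<sigma> \<tau> x s = 1"
    using assms(2) by (simp add: trans_def sinks_def)
  ultimately show ?case using trans_nonneg[OF assms(1) 0] by auto
next
  case (Suc n)
  show ?case
    using Suc by (simp only: nstep.simps)
      (intro sum_mono mult_left_mono trans_nonneg[OF assms(1)]; simp)
qed

definition seqv where
  "seqv G \<sigma> \<tau> x n = (\<Sum>s\<in>sinks G. val G s * nstep G \<sigma> \<tau> n x s)"

lemma seqv_conv:
  assumes "wfg G" "x \<in> verts G"
  shows "seqv G \<sigma> \<tau> x \<longlonglongrightarrow> play_value G \<sigma> \<tau> x"
proof -
  define C where "C = (\<Sum>s\<in>sinks G. val G s)"
  have fs: "finite (sinks G)" using finite_subset[OF sinks_sub wfgD(1)[OF assms(1)]] .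
  have C0: "0 \<le> C" unfolding C_def using wfgD(6)[OF assms(1)] by (simp add: sum_nonneg)
  have Cs: "\<forall>s\<in>sinks G. val G s \<le> C"
    unfolding C_def using wfgD(6)[OF assms(1)] fs by (auto intro: member_le_sum)
  have sup: "\<forall>y\<in>verts G. (\<Sum>z\<in>verts G. trans G \<sigma> \<tau> y z * C) \<le> C"
  proof
    fix y assume "y \<in> verts G"
    then have "(\<Sum>z\<in>verts G. trans G \<sigma> \<tau> y z) * C \<le> 1 * C"
      using trans_rowsum[OF assms(1)] C0 by (intro mult_right_mono) auto
    then show "(\<Sum>z\<in>verts G. trans G \<sigma> \<tau> y z * C) \<le> C" by (simp add: sum_distrib_right)
  qed
  have inc: "incseq (seqv G \<sigma> \<tau> x)"
    unfolding incseq_Suc_iff seqv_def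
    using nstep_mono_sink[OF assms(1) _ assms(2)] wfgD(6)[OF assms(1)]
    by (auto intro!: sum_mono mult_left_mono)
  have bd: "\<forall>i. seqv G \<sigma> \<tau> x i \<le> C"
  proof
    fix i
    have "seqv G \<sigma> \<tau> x i \<le> (\<Sum>y\<in>verts G. nstep G \<sigma> \<tau> i x y * C)"
      unfolding seqv_def using sink_bound[OF assms, of "\<lambda>_. C"] C0 Cs by auto
    also have "\<dots> \<le> C" using super_iter[OF assms(1) sup assms(2)] .
    finally show "seqv G \<sigma> \<tau> x i \<le> C" .
  qed
  obtain L where "seqv G \<sigma> \<tau> x \<longlonglongrightarrow> L" using incseq_convergent[OF inc bd] by blast
  moreover have "play_value G \<sigma> \<tau> x = lim (seqv G \<sigma> \<tau> x)"
    unfolding play_value_def seqv_def by (simp add: fun_eq_iff)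
  ultimately show ?thesis using limI by metis
qed

lemma pv_le_super:
  assumes "wfg G" "x \<in> verts G"
    and U0: "\<forall>y\<in>verts G. 0 \<le> U y" and Us: "\<forall>s\<in>sinks G. val G s \<le> U s"
    and sup: "\<forall>x\<in>verts G. (\<Sum>z\<in>verts G. trans G \<sigma> \<tau> x z * U z) \<le> U x"
  shows "play_value G \<sigma> \<tau> x \<le> U x"
proof (rule LIMSEQ_le_const2[OF seqv_conv[OF assms(1,2)]], intro exI allI impI)
  fix n
  show "seqv G \<sigma> \<tau> x n \<le> U x"
    unfolding seqv_def using sink_bound[OF assms(1,2) U0 Us] super_iter[OF assms(1) sup assms(2)]
    by (rule order_trans)
qed

lemma pv_nonneg:
  assumes "wfg G" "x \<in> verts G"
  shows "0 \<le> play_value G \<sigma> \<tau> x"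
proof (rule LIMSEQ_le_const[OF seqv_conv[OF assms(1,2)]], intro exI allI impI)
  fix n
  show "0 \<le> seqv G \<sigma> \<tau> x n"
    unfolding seqv_def using wfgD(6)[OF assms(1)] nstep_nonneg[OF assms]
    by (auto intro!: sum_nonneg)
qed

lemma pv_step:
  assumes "wfg G" "x \<in> verts G"
  shows "play_value G \<sigma> \<tau> x = (\<Sum>z\<in>verts G. trans G \<sigma> \<tau> x z * play_value G \<sigma> \<tau> z)"
proof -
  have eq: "seqv G \<sigma> \<tau> x (Suc n) = (\<Sum>z\<in>verts G. trans G \<sigma> \<tau> x z * seqv G \<sigma> \<tau> z n)" for n
  proof -
    have "seqv G \<sigma> \<tau> x (Suc n) = (\<Sum>s\<in>sinks G. \<Sum>z\<in>verts G. trans G \<sigma> \<tau> x z * (val G s * nstep G \<sigma> \<tau> n z s))"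
      unfolding seqv_def by (simp add: sum_distrib_left mult.commute mult.left_commute)
    also have "\<dots> = (\<Sum>z\<in>verts G. trans G \<sigma> \<tau> x z * seqv G \<sigma> \<tau> z n)"
      unfolding seqv_def by (subst sum.swap) (simp add: sum_distrib_left)
    finally show ?thesis .
  qed
  have "(\<lambda>n. seqv G \<sigma> \<tau> x (Suc n)) \<longlonglongrightarrow> play_value G \<sigma> \<tau> x"
    using LIMSEQ_Suc[OF seqv_conv[OF assms]] .
  moreover have "(\<lambda>n. seqv G \<sigma> \<tau> x (Suc n)) \<longlonglongrightarrow> (\<Sum>z\<in>verts G. trans G \<sigma> \<tau> x z * play_value G \<sigma> \<tau> z)"
    unfolding eq by (intro tendsto_intros seqv_conv[OF assms(1)]) simp
  ultimately show ?thesis using LIMSEQ_unique by blast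
qed

lemma nstep_sink:
  assumes "wfg G" "s \<in> sinks G"
  shows "nstep G \<sigma> \<tau> n s y = (if y = s then 1 else 0)"
proof (induction n)
  case (Suc n)
  have sV: "s \<in> verts G" using assms(2) by (simp add: sinks_def)
  have "nstep G \<sigma> \<tau> (Suc n) s y = (\<Sum>z\<in>verts G. (if z = s then 1 else 0) * nstep G \<sigma> \<tau> n z y)"
    using assms(2) by (simp add: trans_def sinks_def)
  also have "\<dots> = nstep G \<sigma> \<tau> n s y"
    using sV wfgD(1)[OF assms(1)] by (simp add: sum_delta_l)
  finally show ?case using Suc by simp
qed simp

lemma pv_sink:
  assumes "wfg G" "s \<in> sinks G"
  shows "play_value G \<sigma> \<tau> s = val G s"
proof -
  have fs: "finite (sinks G)" using finite_subset[OF sinks_sub wfgD(1)[OF assms(1)]] .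
  have "seqv G \<sigma> \<tau> s n = val G s" for n
    unfolding seqv_def nstep_sink[OF assms] using fs assms(2)
    by (simp add: if_distrib[of "\<lambda>t. _ * t"] sum.delta cong: if_cong)
  then have "seqv G \<sigma> \<tau> s = (\<lambda>n. val G s)" by auto
  moreover have "s \<in> verts G" using assms(2) by (simp add: sinks_def)
  ultimately have "(\<lambda>n. val G s) \<longlonglongrightarrow> play_value G \<sigma> \<tau> s" using seqv_conv[OF assms(1), of s \<sigma> \<tau>] by simp
  then show ?thesis using LIMSEQ_unique[OF _ tendsto_const] by blast
qed

lemma trans_sum:
  assumes "wfg G" "max_strategy G \<sigma>" "min_strategy G \<tau>" "x \<in> verts G"
  shows "(\<Sum>z\<in>verts G. trans G \<sigma> \<tau> x z * f z) =
    (case kind G x of Max \<Rightarrow> f (\<sigma> x) | Min \<Rightarrow> f (\<tau> x)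
      | Rand \<Rightarrow> (\<Sum>z\<in>verts G. (if (x, z) \<in> arcs G then prob G x z else 0) * f z)
      | Sink \<Rightarrow> f x)"
proof (cases "kind G x")
  case Max
  then have "\<sigma> x \<in> verts G" using assms wfgD(2)[OF assms(1)] by (auto simp: max_strategy_def)
  then show ?thesis using Max wfgD(1)[OF assms(1)] by (simp add: trans_def sum_delta_l)
next
  case Min
  then have "\<tau> x \<in> verts G" using assms wfgD(2)[OF assms(1)] by (auto simp: min_strategy_def)
  then show ?thesis using Min wfgD(1)[OF assms(1)] by (simp add: trans_def sum_delta_l)
next
  case Rand
  then show ?thesis by (simp add: trans_def)
next
  case Sink
  then show ?thesis using assms(4) wfgD(1)[OF assms(1)] by (simp add: trans_def sum_delta_l)
qed

definition infv where
  "infv G \<sigma> x = Inf ((\<lambda>\<tau>. play_value G \<sigma> \<tau> x) ` {\<tau>. min_strategy G \<tau>})"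

definition bellsup where
  "bellsup G \<sigma> Z \<longleftrightarrow> (\<forall>y\<in>verts G. 0 \<le> Z y) \<and> (\<forall>s\<in>sinks G. val G s \<le> Z s) \<and>
     (\<forall>x\<in>verts G. (kind G x = Max \<longrightarrow> Z (\<sigma> x) \<le> Z x) \<and>
        (kind G x = Min \<longrightarrow> (\<exists>y. (x, y) \<in> arcs G \<and> Z y \<le> Z x)) \<and>
        (kind G x = Rand \<longrightarrow> (\<Sum>y\<in>verts G. (if (x, y) \<in> arcs G then prob G x y else 0) * Z y) \<le> Z x))"

lemma ex_min_strategy:
  assumes "wfg G"
  shows "\<exists>\<tau>. min_strategy G \<tau>"
proof -
  have "min_strategy G (\<lambda>x. SOME y. (x, y) \<in> arcs G)"
    unfolding min_strategy_def
  proof (intro ballI impI)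
    fix x assume "x \<in> verts G" "kind G x = Min"
    then have "\<exists>y. (x, y) \<in> arcs G" using wfgD(3)[OF assms] by auto
    then show "(x, SOME y. (x, y) \<in> arcs G) \<in> arcs G" by (rule someI_ex)
  qed
  then show ?thesis by blast
qed

lemma infv_le:
  assumes "wfg G" "min_strategy G \<tau>" "x \<in> verts G"
  shows "infv G \<sigma> x \<le> play_value G \<sigma> \<tau> x"
  unfolding infv_def
proof (rule cInf_lower)
  show "play_value G \<sigma> \<tau> x \<in> (\<lambda>\<tau>. play_value G \<sigma> \<tau> x) ` {\<tau>. min_strategy G \<tau>}"
    using assms by blast
  show "bdd_below ((\<lambda>\<tau>. play_value G \<sigma> \<tau> x) ` {\<tau>. min_strategy G \<tau>})"
    using pv_nonneg[OF assms(1,3)] by (intro bdd_belowI[of _ 0]) auto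
qed

lemma infv_ge:
  assumes "wfg G" "\<And>\<tau>. min_strategy G \<tau> \<Longrightarrow> c \<le> play_value G \<sigma> \<tau> x"
  shows "c \<le> infv G \<sigma> x"
  unfolding infv_def
  using ex_min_strategy[OF assms(1)] assms(2)
  by (intro cInf_greatest) auto

lemma choose_tau:
  assumes "wfg G" "max_strategy G \<sigma>" "bellsup G \<sigma> Z"
  shows "\<exists>\<tau>. min_strategy G \<tau> \<and> (\<forall>x\<in>verts G. (\<Sum>z\<in>verts G. trans G \<sigma> \<tau> x z * Z z) \<le> Z x)"
proof -
  define \<tau> where "\<tau> = (\<lambda>x. SOME y. (x, y) \<in> arcs G \<and> (kind G x = Min \<longrightarrow> Z y \<le> Z x))"
  have t: "(x, \<tau> x) \<in> arcs G \<and> Z (\<tau> x) \<le> Z x" if "x \<in> verts G" "kind G x = Min" for x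
  proof -
    have "\<exists>y. (x, y) \<in> arcs G \<and> (kind G x = Min \<longrightarrow> Z y \<le> Z x)"
      using assms(3) that unfolding bellsup_def by auto
    from someI_ex[OF this] show ?thesis using that unfolding \<tau>_def by auto
  qed
  have ms: "min_strategy G \<tau>" unfolding min_strategy_def using t by auto
  have "\<forall>x\<in>verts G. (\<Sum>z\<in>verts G. trans G \<sigma> \<tau> x z * Z z) \<le> Z x"
  proof
    fix x assume xV: "x \<in> verts G"
    show "(\<Sum>z\<in>verts G. trans G \<sigma> \<tau> x z * Z z) \<le> Z x"
      unfolding trans_sum[OF assms(1,2) ms xV]
      using assms(3) xV t[OF xV] unfolding bellsup_def
      by (cases "kind G x") auto
  qed
  then show ?thesis using ms by blast
qed

lemma infv_le_bellsup:
  assumes "wfg G" "max_strategy G \<sigma>" "bellsup G \<sigma> Z" "x \<in> verts G"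
  shows "infv G \<sigma> x \<le> Z x"
proof -
  obtain \<tau> where t: "min_strategy G \<tau>" "\<forall>x\<in>verts G. (\<Sum>z\<in>verts G. trans G \<sigma> \<tau> x z * Z z) \<le> Z x"
    using choose_tau[OF assms(1-3)] by blast
  have "play_value G \<sigma> \<tau> x \<le> Z x"
    using assms(3) t(2) unfolding bellsup_def by (intro pv_le_super[OF assms(1,4)]) auto
  then show ?thesis using infv_le[OF assms(1) t(1) assms(4), of \<sigma>] by (meson order_trans)
qed

lemma infv_sink:
  assumes "wfg G" "s \<in> sinks G"
  shows "infv G \<sigma> s = val G s"
proof -
  obtain \<tau> where t: "min_strategy G \<tau>" using ex_min_strategy[OF assms(1)] by blast
  have sV: "s \<in> verts G" using assms(2) by (simp add: sinks_def)
  show ?thesis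
    using infv_le[OF assms(1) t sV, of \<sigma>] infv_ge[OF assms(1), of "val G s" \<sigma> s]
      pv_sink[OF assms] by (simp add: order_antisym)
qed

lemma pv_max:
  assumes "wfg G" "max_strategy G \<sigma>" "min_strategy G \<tau>" "x \<in> verts G" "kind G x = Max"
  shows "play_value G \<sigma> \<tau> x = play_value G \<sigma> \<tau> (\<sigma> x)"
  using pv_step[OF assms(1,4)] trans_sum[OF assms(1-4)] assms(5) by simp

lemma pv_min:
  assumes "wfg G" "max_strategy G \<sigma>" "min_strategy G \<tau>" "x \<in> verts G" "kind G x = Min"
  shows "play_value G \<sigma> \<tau> x = play_value G \<sigma> \<tau> (\<tau> x)"
  using pv_step[OF assms(1,4)] trans_sum[OF assms(1-4)] assms(5) by simp

lemma pv_rand: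
  assumes "wfg G" "max_strategy G \<sigma>" "min_strategy G \<tau>" "x \<in> verts G" "kind G x = Rand"
  shows "play_value G \<sigma> \<tau> x = (\<Sum>y\<in>verts G. (if (x, y) \<in> arcs G then prob G x y else 0) * play_value G \<sigma> \<tau> y)"
  using pv_step[OF assms(1,4)] trans_sum[OF assms(1-4)] assms(5) by simp

lemma infv_bellsup:
  assumes "wfg G" "max_strategy G \<sigma>"
  shows "bellsup G \<sigma> (infv G \<sigma>)"
  unfolding bellsup_def
proof (intro conjI ballI impI)
  fix y assume "y \<in> verts G"
  then show "0 \<le> infv G \<sigma> y" using pv_nonneg[OF assms(1)] by (intro infv_ge[OF assms(1)])
next
  fix s assume "s \<in> sinks G"
  then show "val G s \<le> infv G \<sigma> s" using infv_sink[OF assms(1)] by simp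
next
  fix x assume xV: "x \<in> verts G" and k: "kind G x = Max"
  have sV: "\<sigma> x \<in> verts G" using assms xV k wfgD(2)[OF assms(1)] by (auto simp: max_strategy_def)
  show "infv G \<sigma> (\<sigma> x) \<le> infv G \<sigma> x"
    using infv_le[OF assms(1) _ sV] pv_max[OF assms _ xV k] by (intro infv_ge[OF assms(1)]) simp
next
  fix x assume xV: "x \<in> verts G" and k: "kind G x = Min"
  define S where "S = {y. (x, y) \<in> arcs G}"
  have SV: "S \<subseteq> verts G" using wfgD(2)[OF assms(1)] by (auto simp: S_def)
  have fS: "finite S" using finite_subset[OF SV wfgD(1)[OF assms(1)]] .
  have neS: "S \<noteq> {}" using wfgD(3)[OF assms(1) xV] k by (auto simp: S_def)
  have "Lattices_Big.Min (infv G \<sigma> ` S) \<in> infv G \<sigma> ` S" using fS neS by (intro Min_in) auto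
  then obtain y0 where y0: "y0 \<in> S" "infv G \<sigma> y0 = Lattices_Big.Min (infv G \<sigma> ` S)"
    by (metis imageE)
  have "infv G \<sigma> y0 \<le> infv G \<sigma> x"
  proof (rule infv_ge[OF assms(1)])
    fix \<tau> assume t: "min_strategy G \<tau>"
    have tS: "\<tau> x \<in> S" using t xV k by (auto simp: min_strategy_def S_def)
    have "infv G \<sigma> y0 \<le> infv G \<sigma> (\<tau> x)" using y0 tS fS by simp
    also have "\<dots> \<le> play_value G \<sigma> \<tau> (\<tau> x)" using infv_le[OF assms(1) t] tS SV by blast
    also have "\<dots> = play_value G \<sigma> \<tau> x" using pv_min[OF assms t xV k] by simp
    finally show "infv G \<sigma> y0 \<le> play_value G \<sigma> \<tau> x" .
  qed
  then show "\<exists>y. (x, y) \<in> arcs G \<and> infv G \<sigma> y \<le> infv G \<sigma> x" using y0(1) by (auto simp: S_def)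
next
  fix x assume xV: "x \<in> verts G" and k: "kind G x = Rand"
  show "(\<Sum>y\<in>verts G. (if (x, y) \<in> arcs G then prob G x y else 0) * infv G \<sigma> y) \<le> infv G \<sigma> x"
  proof (rule infv_ge[OF assms(1)])
    fix \<tau> assume t: "min_strategy G \<tau>"
    have "(\<Sum>y\<in>verts G. (if (x, y) \<in> arcs G then prob G x y else 0) * infv G \<sigma> y)
       \<le> (\<Sum>y\<in>verts G. (if (x, y) \<in> arcs G then prob G x y else 0) * play_value G \<sigma> \<tau> y)"
      using infv_le[OF assms(1) t] wfgD(4)[OF assms(1) xV k]
      by (intro sum_mono mult_left_mono) auto
    also have "\<dots> = play_value G \<sigma> \<tau> x" using pv_rand[OF assms t xV k] by simp
    finally show "(\<Sum>y\<in>verts G. (if (x, y) \<in> arcs G then prob G x y else 0) * infv G \<sigma> y) \<le> play_value G \<sigma> \<tau> x" .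
  qed
qed

lemma value_max_infv:
  assumes "wfg G" "max_strategy G \<sigma>" "x \<in> verts G"
  shows "value_max G \<sigma> x = infv G \<sigma> x"
proof -
  obtain \<tau> where t: "min_strategy G \<tau>"
     "\<forall>x\<in>verts G. (\<Sum>z\<in>verts G. trans G \<sigma> \<tau> x z * infv G \<sigma> z) \<le> infv G \<sigma> x"
    using choose_tau[OF assms(1,2) infv_bellsup[OF assms(1,2)]] by blast
  have le: "play_value G \<sigma> \<tau> y \<le> infv G \<sigma> y" if "y \<in> verts G" for y
    using infv_bellsup[OF assms(1,2)] t(2) unfolding bellsup_def
    by (intro pv_le_super[OF assms(1) that]) auto
  have "best_response G \<sigma> \<tau>"
    unfolding best_response_def using t(1) le infv_le[OF assms(1)] by (meson order_trans)
  then have br: "best_response G \<sigma> (SOME \<tau>. best_response G \<sigma> \<tau>)" by (rule someI[where P = "best_response G \<sigma>"])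
  then have "play_value G \<sigma> (SOME \<tau>. best_response G \<sigma> \<tau>) x \<le> play_value G \<sigma> \<tau> x"
    using t(1) assms(3) unfolding best_response_def by blast
  moreover have "infv G \<sigma> x \<le> play_value G \<sigma> (SOME \<tau>. best_response G \<sigma> \<tau>) x"
    using br assms unfolding best_response_def by (intro infv_le) auto
  ultimately show ?thesis unfolding value_max_def using le[OF assms(3)] by simp
qed

definition hop :: "('v \<times> 'v) set \<Rightarrow> 'v \<Rightarrow> 'v \<Rightarrow> 'v + ('v \<times> 'v)" where
  "hop A x y = (if (x, y) \<in> A then Inr (x, y) else Inl y)"

lemma tr_verts: "verts (transform G A f) = Inl ` verts G \<union> Inr ` A"
  by (simp add: transform_def)
lemma tr_kind: "kind (transform G A f) (Inl x) = kind G x" "kind (transform G A f) (Inr e) = Sink"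
  by (simp_all add: transform_def)
lemma tr_arcs1:
  "(Inl x, Inl y) \<in> arcs (transform G A f) \<longleftrightarrow> (x, y) \<in> arcs G \<and> (x, y) \<notin> A"
  by (auto simp: transform_def)
lemma tr_arcs2:
  "(Inl x, Inr e) \<in> arcs (transform G A f) \<longleftrightarrow> e \<in> A \<and> fst e = x"
  by (cases e) (auto simp: transform_def)
lemma tr_arcs3:
  "(Inr e, w) \<in> arcs (transform G A f) \<longleftrightarrow> e \<in> A \<and> w = Inr e"
  by (cases e) (auto simp: transform_def)
lemmas tr_arcs = tr_arcs1 tr_arcs2 tr_arcs3
lemma tr_prob:
  "prob (transform G A f) (Inl x) (Inl y) = prob G x y"
  "prob (transform G A f) (Inl x) (Inr (a, b)) = (if a = x then prob G x b else 0)"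
  by (simp_all add: transform_def)
lemma tr_val: "val (transform G A f) (Inl x) = val G x" "val (transform G A f) (Inr e) = f e"
  by (simp_all add: transform_def)
lemma tr_sinks: "sinks (transform G A f) = Inl ` sinks G \<union> Inr ` A"
  by (auto simp: sinks_def transform_def)

lemma hop_arc:
  assumes "A \<subseteq> arcs G"
  shows "(Inl x, hop A x y) \<in> arcs (transform G A f) \<longleftrightarrow> (x, y) \<in> arcs G"
  using assms by (auto simp: hop_def tr_arcs)

lemma arc_hop:
  assumes "(Inl x, w) \<in> arcs (transform G A f)" "A \<subseteq> arcs G"
  shows "\<exists>y. (x, y) \<in> arcs G \<and> w = hop A x y"
proof (cases w)
  case (Inl y)
  then show ?thesis using assms by (auto simp: hop_def tr_arcs)
next
  case (Inr e)
  then show ?thesis using assms by (cases e) (auto simp: hop_def tr_arcs)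
qed

lemma lift_hop: "lift_strat A \<sigma> (Inl x) = hop A x (\<sigma> x)"
  by (simp add: lift_strat_def hop_def)

lemma sum_fst_filter:
  assumes "finite (verts G)" "A \<subseteq> verts G \<times> verts G"
  shows "(\<Sum>e\<in>A. if fst e = x then F (snd e) else 0) = (\<Sum>y\<in>verts G. if (x, y) \<in> A then F y else (0::real))"
proof -
  have fA: "finite A" using finite_subset[OF assms(2) finite_cartesian_product[OF assms(1) assms(1)]] .
  have "(\<Sum>e\<in>A. if fst e = x then F (snd e) else 0) = (\<Sum>e\<in>{e\<in>A. fst e = x}. F (snd e))"
    using fA by (simp add: sum.inter_filter)
  also have "\<dots> = (\<Sum>y\<in>{y\<in>verts G. (x, y) \<in> A}. F y)"
  proof (rule sum.reindex_bij_witness[where i = "\<lambda>y. (x, y)" and j = snd])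
  qed (use assms in auto)
  also have "\<dots> = (\<Sum>y\<in>verts G. if (x, y) \<in> A then F y else 0)"
    using assms(1) by (simp add: sum.inter_filter)
  finally show ?thesis .
qed

lemma tr_sum:
  assumes "finite (verts G)" "arcs G \<subseteq> verts G \<times> verts G" "A \<subseteq> arcs G"
  shows "(\<Sum>w\<in>verts (transform G A f). (if (Inl x, w) \<in> arcs (transform G A f) then prob (transform G A f) (Inl x) w else 0) * g w)
       = (\<Sum>y\<in>verts G. (if (x, y) \<in> arcs G then prob G x y else 0) * g (hop A x y))"
proof -
  let ?G' = "transform G A f"
  have AV: "A \<subseteq> verts G \<times> verts G" using assms by blast
  have fA: "finite A" using finite_subset[OF AV finite_cartesian_product[OF assms(1) assms(1)]] .
  have "(\<Sum>w\<in>verts ?G'. (if (Inl x, w) \<in> arcs ?G' then prob ?G' (Inl x) w else 0) * g w)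
     = (\<Sum>y\<in>verts G. (if (Inl x, Inl y) \<in> arcs ?G' then prob ?G' (Inl x) (Inl y) else 0) * g (Inl y))
     + (\<Sum>e\<in>A. (if (Inl x, Inr e) \<in> arcs ?G' then prob ?G' (Inl x) (Inr e) else 0) * g (Inr e))"
    unfolding tr_verts using assms(1) fA
    by (subst sum.union_disjoint) (auto simp: sum.reindex)
  also have "(\<Sum>e\<in>A. (if (Inl x, Inr e) \<in> arcs ?G' then prob ?G' (Inl x) (Inr e) else 0) * g (Inr e))
      = (\<Sum>e\<in>A. if fst e = x then prob G x (snd e) * g (Inr (x, snd e)) else 0)"
    by (intro sum.cong refl) (auto simp: tr_arcs tr_prob split: prod.splits)
  also have "\<dots> = (\<Sum>y\<in>verts G. if (x, y) \<in> A then prob G x y * g (Inr (x, y)) else 0)"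
    using sum_fst_filter[OF assms(1) AV] .
  also have "(\<Sum>y\<in>verts G. (if (Inl x, Inl y) \<in> arcs ?G' then prob ?G' (Inl x) (Inl y) else 0) * g (Inl y))
     + (\<Sum>y\<in>verts G. if (x, y) \<in> A then prob G x y * g (Inr (x, y)) else 0)
     = (\<Sum>y\<in>verts G. (if (x, y) \<in> arcs G then prob G x y else 0) * g (hop A x y))"
    unfolding sum.distrib[symmetric] using assms(3)
    by (intro sum.cong refl) (auto simp: tr_arcs tr_prob hop_def)
  finally show ?thesis .
qed

lemma ssg_wfg:
  assumes "ssg G"
  shows "wfg G"
proof -
  have V: "arcs G \<subseteq> verts G \<times> verts G" "finite (verts G)" using assms by (auto simp: ssg_def)
  have "(\<Sum>y\<in>verts G. if (x, y) \<in> arcs G then prob G x y else 0) = (\<Sum>y\<in>{y. (x, y) \<in> arcs G}. prob G x y)" for x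
  proof -
    have "{y. (x, y) \<in> arcs G} = {y\<in>verts G. (x, y) \<in> arcs G}" using V by auto
    then show ?thesis using V(2) by (simp add: sum.inter_filter)
  qed
  then show ?thesis using assms unfolding ssg_def wfg_def
    by (auto intro: less_imp_le)
qed

lemma wfg_transform:
  assumes "wfg G" "A \<subseteq> arcs G" "\<forall>e\<in>A. 0 \<le> f e"
  shows "wfg (transform G A f)"
proof -
  let ?G' = "transform G A f"
  note W = wfgD[OF assms(1)]
  have AV: "A \<subseteq> verts G \<times> verts G" using assms(2) W(2) by blast
  have fA: "finite A" using finite_subset[OF AV finite_cartesian_product[OF W(1) W(1)]] .
  have "finite (verts ?G')" using W(1) fA by (simp add: tr_verts)
  moreover have "arcs ?G' \<subseteq> verts ?G' \<times> verts ?G'"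
  proof
    fix p assume p: "p \<in> arcs ?G'"
    then show "p \<in> verts ?G' \<times> verts ?G'"
      using W(2) AV unfolding tr_verts
      by (auto simp: transform_def)
  qed
  moreover have "\<forall>w\<in>verts ?G'. kind ?G' w \<noteq> Sink \<longrightarrow> (\<exists>y. (w, y) \<in> arcs ?G')"
  proof (intro ballI impI)
    fix w assume "w \<in> verts ?G'" "kind ?G' w \<noteq> Sink"
    then obtain x where x: "w = Inl x" "x \<in> verts G" "kind G x \<noteq> Sink"
      by (auto simp: tr_verts tr_kind)
    then obtain y where "(x, y) \<in> arcs G" using W(3) by blast
    then show "\<exists>y. (w, y) \<in> arcs ?G'" using hop_arc[OF assms(2)] x by blast
  qed
  moreover have "\<forall>w\<in>verts ?G'. kind ?G' w = Rand \<longrightarrow>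
        (\<forall>y. (w, y) \<in> arcs ?G' \<longrightarrow> 0 \<le> prob ?G' w y) \<and>
        (\<Sum>y\<in>verts ?G'. if (w, y) \<in> arcs ?G' then prob ?G' w y else 0) \<le> 1"
  proof (intro ballI impI conjI allI)
    fix w y assume w: "w \<in> verts ?G'" "kind ?G' w = Rand" and a: "(w, y) \<in> arcs ?G'"
    then obtain x where x: "w = Inl x" "x \<in> verts G" "kind G x = Rand"
      by (auto simp: tr_verts tr_kind)
    obtain z where "(x, z) \<in> arcs G" "y = hop A x z" using arc_hop[OF a[unfolded x(1)] assms(2)] by blast
    then show "0 \<le> prob ?G' w y" using W(4)[OF x(2,3)] x(1)
      by (auto simp: hop_def tr_prob)
  next
    fix w assume w: "w \<in> verts ?G'" "kind ?G' w = Rand"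
    then obtain x where x: "w = Inl x" "x \<in> verts G" "kind G x = Rand"
      by (auto simp: tr_verts tr_kind)
    have "(\<Sum>y\<in>verts ?G'. if (w, y) \<in> arcs ?G' then prob ?G' w y else 0)
      = (\<Sum>y\<in>verts ?G'. (if (Inl x, y) \<in> arcs ?G' then prob ?G' (Inl x) y else 0) * 1)" unfolding x(1) by simp
    also have "\<dots> = (\<Sum>y\<in>verts G. (if (x, y) \<in> arcs G then prob G x y else 0) * 1)"
      by (rule tr_sum[OF W(1,2) assms(2)])
    also have "\<dots> \<le> 1" using W(5)[OF x(2,3)] by simp
    finally show "(\<Sum>y\<in>verts ?G'. if (w, y) \<in> arcs ?G' then prob ?G' w y else 0) \<le> 1" .
  qed
  moreover have "\<forall>s\<in>sinks ?G'. 0 \<le> val ?G' s"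
    using W(6) assms(3) by (auto simp: tr_sinks tr_val)
  ultimately show ?thesis unfolding wfg_def by blast
qed

lemma max_lift:
  assumes "max_strategy G \<sigma>" "A \<subseteq> arcs G"
  shows "max_strategy (transform G A f) (lift_strat A \<sigma>)"
  unfolding max_strategy_def
proof (intro ballI impI)
  fix w assume "w \<in> verts (transform G A f)" "kind (transform G A f) w = Max"
  then obtain x where x: "w = Inl x" "x \<in> verts G" "kind G x = Max"
    by (auto simp: tr_verts tr_kind)
  then show "(w, lift_strat A \<sigma> w) \<in> arcs (transform G A f)"
    using assms hop_arc[OF assms(2)] by (auto simp: lift_hop max_strategy_def)
qed

theorem lemma12:
  fixes G :: "'v ssg" and A :: "('v \<times> 'v) set" and \<sigma> :: "'v \<Rightarrow> 'v"
  assumes "ssg G"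
    and "A \<subseteq> arcs G"
    and "\<forall>(x, y)\<in>A. kind G x \<noteq> Sink"
    and "max_strategy G \<sigma>"
    and "x \<in> verts G"
  shows "value_max G \<sigma> x = value_max (transform_strat G A \<sigma>) (lift_strat A \<sigma>) (Inl x)"
proof -
  have wG: "wfg G" using assms(1) by (rule ssg_wfg)
  note W = wfgD[OF wG]
  define f0 where "f0 = (\<lambda>(x::'v, y). value_max G \<sigma> y)"
  define G' where "G' = transform G A f0"
  define \<sigma>' where "\<sigma>' = lift_strat A \<sigma>"
  define u where "u = infv G \<sigma>"
  define u' where "u' = infv G' \<sigma>'"
  have AV: "A \<subseteq> verts G \<times> verts G" using assms(2) W(2) by blast
  have bu: "bellsup G \<sigma> u" unfolding u_def by (rule infv_bellsup[OF wG assms(4)])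
  have f0u: "f0 e = u (snd e)" if "e \<in> A" for e
    using that AV value_max_infv[OF wG assms(4)] by (auto simp: f0_def u_def split: prod.splits)
  have f0nn: "\<forall>e\<in>A. 0 \<le> f0 e" using f0u bu AV unfolding bellsup_def by fastforce
  have wG': "wfg G'" unfolding G'_def by (rule wfg_transform[OF wG assms(2) f0nn])
  have mG': "max_strategy G' \<sigma>'" unfolding G'_def \<sigma>'_def by (rule max_lift[OF assms(4,2)])
  have bu': "bellsup G' \<sigma>' u'" unfolding u'_def by (rule infv_bellsup[OF wG' mG'])
  have xV': "Inl x \<in> verts G'" using assms(5) by (simp add: G'_def tr_verts)
  have lhs: "value_max G \<sigma> x = u x" using value_max_infv[OF wG assms(4,5)] by (simp add: u_def)
  have rhs: "value_max (transform_strat G A \<sigma>) (lift_strat A \<sigma>) (Inl x) = u' (Inl x)"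
    using value_max_infv[OF wG' mG' xV'] by (simp add: u'_def G'_def \<sigma>'_def f0_def transform_strat_def)
  define U where "U = (\<lambda>w::'v + ('v \<times> 'v). case w of Inl y \<Rightarrow> u y | Inr e \<Rightarrow> u (snd e))"
  have Uhop: "U (hop A a b) = u b" for a b by (simp add: U_def hop_def)
  have "bellsup G' \<sigma>' U"
    unfolding bellsup_def
  proof (intro conjI ballI impI)
    fix w assume "w \<in> verts G'"
    then show "0 \<le> U w" using bu AV unfolding bellsup_def by (auto simp: G'_def tr_verts U_def)
  next
    fix s assume "s \<in> sinks G'"
    then show "val G' s \<le> U s" using bu f0u unfolding bellsup_def
      by (auto simp: G'_def tr_sinks tr_val U_def)
  next
    fix w assume w: "w \<in> verts G'" "kind G' w = Max"
    then obtain y where y: "w = Inl y" "y \<in> verts G" "kind G y = Max"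
      by (auto simp: G'_def tr_verts tr_kind)
    then show "U (\<sigma>' w) \<le> U w" using bu unfolding bellsup_def
      by (auto simp: \<sigma>'_def lift_hop Uhop) (simp add: U_def)
  next
    fix w assume w: "w \<in> verts G'" "kind G' w = Min"
    then obtain y where y: "w = Inl y" "y \<in> verts G" "kind G y = Min"
      by (auto simp: G'_def tr_verts tr_kind)
    then obtain z where z: "(y, z) \<in> arcs G" "u z \<le> u y" using bu unfolding bellsup_def by blast
    then have "(w, hop A y z) \<in> arcs G'" using hop_arc[OF assms(2)] y by (simp add: G'_def)
    moreover have "U (hop A y z) \<le> U w" using z y Uhop[of y z] by (simp add: U_def)
    ultimately show "\<exists>v. (w, v) \<in> arcs G' \<and> U v \<le> U w" by blast
  next
    fix w assume w: "w \<in> verts G'" "kind G' w = Rand"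
    then obtain y where y: "w = Inl y" "y \<in> verts G" "kind G y = Rand"
      by (auto simp: G'_def tr_verts tr_kind)
    have "(\<Sum>v\<in>verts G'. (if (w, v) \<in> arcs G' then prob G' w v else 0) * U v)
        = (\<Sum>z\<in>verts G. (if (y, z) \<in> arcs G then prob G y z else 0) * U (hop A y z))"
      unfolding G'_def y(1) by (rule tr_sum[OF W(1,2) assms(2)])
    also have "\<dots> \<le> U w" using bu y unfolding bellsup_def Uhop by (simp add: U_def)
    finally show "(\<Sum>v\<in>verts G'. (if (w, v) \<in> arcs G' then prob G' w v else 0) * U v) \<le> U w" .
  qed
  then have up: "u' (Inl x) \<le> u x"
    using infv_le_bellsup[OF wG' mG' _ xV', of U] by (simp add: u'_def U_def)
  define Z where "Z = (\<lambda>y. min (u y) (u' (Inl y)))"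
  have u'sink: "u' (Inr e) = u (snd e)" if "e \<in> A" for e
  proof -
    have "Inr e \<in> sinks G'" using that by (simp add: G'_def tr_sinks)
    then show ?thesis using infv_sink[OF wG'] f0u[OF that] by (simp add: u'_def G'_def tr_val)
  qed
  have K: "Z b \<le> u' (hop A a b)" if "(a, b) \<in> arcs G" for a b
    using u'sink by (auto simp: hop_def Z_def)
  have "bellsup G \<sigma> Z"
    unfolding bellsup_def
  proof (intro conjI ballI impI)
    fix y assume "y \<in> verts G"
    then show "0 \<le> Z y" using bu bu' unfolding bellsup_def
      by (auto simp: Z_def G'_def tr_verts)
  next
    fix s assume s: "s \<in> sinks G"
    then have "Inl s \<in> sinks G'" by (simp add: G'_def tr_sinks)
    then have "val G s \<le> u' (Inl s)" using bu' unfolding bellsup_def by (auto simp: G'_def tr_val)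
    then show "val G s \<le> Z s" using bu s unfolding bellsup_def by (auto simp: Z_def)
  next
    fix y assume y: "y \<in> verts G" "kind G y = Max"
    have yV': "Inl y \<in> verts G'" "kind G' (Inl y) = Max" using y by (auto simp: G'_def tr_verts tr_kind)
    have a: "(y, \<sigma> y) \<in> arcs G" using assms(4) y by (auto simp: max_strategy_def)
    have "Z (\<sigma> y) \<le> u' (\<sigma>' (Inl y))" using K[OF a] by (simp add: \<sigma>'_def lift_hop)
    also have "\<dots> \<le> u' (Inl y)" using bu' yV' unfolding bellsup_def by blast
    finally have "Z (\<sigma> y) \<le> u' (Inl y)" .
    moreover have "Z (\<sigma> y) \<le> u y" using bu y unfolding bellsup_def by (auto simp: Z_def)
    ultimately show "Z (\<sigma> y) \<le> Z y" by (simp add: Z_def)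
  next
    fix y assume y: "y \<in> verts G" "kind G y = Min"
    have yV': "Inl y \<in> verts G'" "kind G' (Inl y) = Min" using y by (auto simp: G'_def tr_verts tr_kind)
    obtain z1 where z1: "(y, z1) \<in> arcs G" "u z1 \<le> u y" using bu y unfolding bellsup_def by blast
    obtain w where w: "(Inl y, w) \<in> arcs G'" "u' w \<le> u' (Inl y)" using bu' yV' unfolding bellsup_def by blast
    obtain z2 where z2: "(y, z2) \<in> arcs G" "w = hop A y z2"
      using arc_hop[OF w(1)[unfolded G'_def] assms(2)] by blast
    show "\<exists>z. (y, z) \<in> arcs G \<and> Z z \<le> Z y"
    proof (cases "u y \<le> u' (Inl y)")
      case True
      then show ?thesis using z1 by (intro exI[of _ z1]) (auto simp: Z_def)
    next
      case False
      then show ?thesis using z2 K[OF z2(1)] w(2) by (intro exI[of _ z2]) (auto simp: Z_def)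
    qed
  next
    fix y assume y: "y \<in> verts G" "kind G y = Rand"
    have yV': "Inl y \<in> verts G'" "kind G' (Inl y) = Rand" using y by (auto simp: G'_def tr_verts tr_kind)
    have pn: "0 \<le> (if (y, z) \<in> arcs G then prob G y z else 0)" for z using W(4)[OF y] by auto
    have "(\<Sum>z\<in>verts G. (if (y, z) \<in> arcs G then prob G y z else 0) * Z z)
        \<le> (\<Sum>z\<in>verts G. (if (y, z) \<in> arcs G then prob G y z else 0) * u z)"
      using pn by (intro sum_mono mult_left_mono) (auto simp: Z_def)
    also have "\<dots> \<le> u y" using bu y unfolding bellsup_def by blast
    finally have 1: "(\<Sum>z\<in>verts G. (if (y, z) \<in> arcs G then prob G y z else 0) * Z z) \<le> u y" .
    have "(\<Sum>z\<in>verts G. (if (y, z) \<in> arcs G then prob G y z else 0) * Z z)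
        \<le> (\<Sum>z\<in>verts G. (if (y, z) \<in> arcs G then prob G y z else 0) * u' (hop A y z))"
    proof (intro sum_mono)
      fix z assume "z \<in> verts G"
      show "(if (y, z) \<in> arcs G then prob G y z else 0) * Z z \<le> (if (y, z) \<in> arcs G then prob G y z else 0) * u' (hop A y z)"
        using pn[of z] K[of y z] by (cases "(y, z) \<in> arcs G") (auto intro: mult_left_mono)
    qed
    also have "\<dots> = (\<Sum>v\<in>verts G'. (if (Inl y, v) \<in> arcs G' then prob G' (Inl y) v else 0) * u' v)"
      unfolding G'_def by (rule tr_sum[OF W(1,2) assms(2), symmetric])
    also have "\<dots> \<le> u' (Inl y)" using bu' yV' unfolding bellsup_def by blast
    finally have 2: "(\<Sum>z\<in>verts G. (if (y, z) \<in> arcs G then prob G y z else 0) * Z z) \<le> u' (Inl y)" .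
    show "(\<Sum>z\<in>verts G. (if (y, z) \<in> arcs G then prob G y z else 0) * Z z) \<le> Z y"
      using 1 2 by (simp add: Z_def)
  qed
  have lo: "u x \<le> Z x"
    using infv_le_bellsup[OF wG assms(4) \<open>bellsup G \<sigma> Z\<close> assms(5)] by (simp add: u_def)
  then have "u x \<le> u' (Inl x)" by (simp add: Z_def)
  with up lhs rhs show ?thesis by simp
qed

end
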